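(* Let $d$ be a positive even integer and $s$ a positive integer with $2s\leqslant d$. Then the union $\bigcup_{\varepsilon\in I^s}C_\varepsilon\subseteq\{0,1,*\}^d$ is a $(d-s)$-neighborly code, i.e. $\mathrm{dist}(u,v)\leqslant d-s$ for all $u,v$ in this union.
   Context: Strings over $\{0,1,*\}$ ($*$ is a "joker"); for $u,v\in\{0,1,*\}^n$, $\mathrm{dist}(u,v)$ is the number of positions $i$ with $u_i\neq v_i$ and $u_i,v_i\in\{0,1\}$. A set $A\subseteq\{0,1,*\}^n$ is a $k$-neighborly code if $\max_{u,v\in A}\mathrm{dist}(u,v)\leqslant k$. Concatenation identifies $(x,y)$ with the string $xy$. Let $I=\{0,1\}$, $|x|=\sum_i x_i$ for binary $x$. Let $*^0=\{*\}$, $*^1=I$, and for $\varepsilon\in I^s$, $*^\varepsilon=*^{\varepsilon_1}\times\cdots\times *^{\varepsilon_s}$. Let $\alpha=(0,\ldots,0)$, $\omega=(1,\ldots,1)\in I^s$. For $\varepsilon\in I^s\setminus\{\alpha,\omega\}$ let $i=t(\varepsilon)$ be the unique index with $\varepsilon_i\neq\varepsilon_{i+1}=\cdots=\varepsilon_s$, and $A_\varepsilon=\{\varepsilon_1\}\times\cdots\times\{\varepsilon_i\}\times I^{s-1-i}\subseteq I^{s-1}$. Define subsets of $I^{d-s}$: $X_0=\{x\colon |x|\leqslant \frac d2-s\}$; $X_k=\{x\colon |x|=\frac d2-s+k\}$ for $0<k<s$; $X_s=\{x\colon |x|\geqslant \frac d2\}$. For $\varepsilon\in I^s\setminus\{\alpha,\omega\}$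 set $B_\varepsilon=X_{|\varepsilon|}\cap(I^{d-2s+1}\times A_\varepsilon)$, where $I^{d-s}=I^{d-2s+1}\times I^{s-1}$; set $B_\alpha=X_0$, $B_\omega=X_s$. Finally $C_\varepsilon=B_\varepsilon\times *^\varepsilon\subseteq\{0,1,*\}^d$ for $\varepsilon\in I^s$. *)

theory Defs
  imports Main
begin

text \<open>Symbols of the alphabet {0,1,*}; Jk is the joker *.\<close>
datatype sym = S0 | S1 | Jk

definition dist :: "sym list \<Rightarrow> sym list \<Rightarrow> nat" where
  "dist u v = card {i. i < length u \<and> i < length v \<and> u!i \<noteq> v!i \<and> u!i \<noteq> Jk \<and> v!i \<noteq> Jk}"

definition neighborly :: "nat \<Rightarrow> sym list set \<Rightarrow> bool" where
  "neighborly k A \<longleftrightarrow> (\<forall>u\<in>A. \<forall>v\<in>A. dist u v \<le> k)"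

definition binstr :: "nat \<Rightarrow> nat list set" where
  "binstr n = {x. length x = n \<and> set x \<subseteq> {0,1}}"

definition wt :: "nat list \<Rightarrow> nat" where "wt x = sum_list x"

definition tosym :: "nat \<Rightarrow> sym" where "tosym b = (if b = 0 then S0 else S1)"

definition jok :: "nat list \<Rightarrow> sym list set" where
  "jok eps = listset (map (\<lambda>e. if e = 0 then {Jk} else {S0, S1}) eps)"

text \<open>t(eps) (1-indexed): the unique i with eps_i \<noteq> eps_(i+1) = ... = eps_s.\<close>
definition tpos :: "nat list \<Rightarrow> nat" where
  "tpos eps = (THE i. 1 \<le> i \<and> i < length eps \<and> eps!(i-1) \<noteq> eps!i \<and>
       (\<forall>j. i \<le> j \<and> j < length eps \<longrightarrow> eps!j = eps!(length eps - 1)))"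

definition Aset :: "nat list \<Rightarrow> nat list set" where
  "Aset eps = {a \<in> binstr (length eps - 1). \<forall>j < tpos eps. a!j = eps!j}"

definition Xset :: "nat \<Rightarrow> nat \<Rightarrow> nat \<Rightarrow> nat list set" where
  "Xset d s k =
    (if k = 0 then {x \<in> binstr (d - s). wt x \<le> d div 2 - s}
     else if k < s then {x \<in> binstr (d - s). wt x = d div 2 - s + k}
     else {x \<in> binstr (d - s). wt x \<ge> d div 2})"

text \<open>B_eps, with I^(d-s) = I^(d-2s+1) x I^(s-1).\<close>
definition Bset :: "nat \<Rightarrow> nat \<Rightarrow> nat list \<Rightarrow> nat list set" where
  "Bset d s eps =
    (if eps = replicate s 0 then Xset d s 0
     else if eps = replicate s 1 then Xset d s s
     else {x \<in> Xset d s (wt eps). drop (d - 2*s + 1) x \<in> Aset eps})"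

definition Cset :: "nat \<Rightarrow> nat \<Rightarrow> nat list \<Rightarrow> sym list set" where
  "Cset d s eps = {map tosym x @ w | x w. x \<in> Bset d s eps \<and> w \<in> jok eps}"

end

theory Submission
  imports Defs
begin

lemma listset_mem:
  "xs \<in> listset As \<Longrightarrow> length xs = length As \<and> (\<forall>i<length As. xs!i \<in> As!i)"
proof (induction As arbitrary: xs)
  case Nil then show ?case by simp
next
  case (Cons A As)
  then obtain a ys where "xs = a # ys" "a \<in> A" "ys \<in> listset As"
    by (auto simp: set_Cons_def)
  with Cons.IH[of ys] show ?case by (auto simp: nth_Cons split: nat.splits)
qed

lemma jok_mem:
  assumes "w \<in> jok eps"
  shows "length w = length eps" "\<And>i. i < length eps \<Longrightarrow> w!i = Jk \<longleftrightarrow> eps!i = 0"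
proof -
  have h: "length w = length eps \<and> (\<forall>i<length eps. w!i \<in> (if eps!i = 0 then {Jk} else {S0, S1}))"
    using listset_mem[OF assms[unfolded jok_def]] by simp
  then show "length w = length eps" by simp
  fix i assume "i < length eps"
  with h show "w!i = Jk \<longleftrightarrow> eps!i = 0" by (cases "eps!i = 0") auto
qed

lemma binstr_nth: "x \<in> binstr n \<Longrightarrow> i < n \<Longrightarrow> x!i = 0 \<or> x!i = 1"
  unfolding binstr_def using nth_mem by fastforce

lemma binstr_len: "x \<in> binstr n \<Longrightarrow> length x = n"
  unfolding binstr_def by simp

lemma wt_sum: "wt x = (\<Sum>i<length x. x!i)"
  unfolding wt_def by (simp add: sum_list_sum_nth atLeast0LessThan)

lemma card_both1:
  assumes "x \<in> binstr n" "y \<in> binstr n"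
  shows "card {i. i < n \<and> x!i = 1 \<and> y!i = 1} = (\<Sum>i<n. x!i * y!i)"
proof -
  have "card {i. i < n \<and> x!i = 1 \<and> y!i = 1} = card {i\<in>{..<n}. x!i = 1 \<and> y!i = 1}" by (rule arg_cong[where f=card]) auto
  also have "\<dots> = (\<Sum>i<n. if x!i = 1 \<and> y!i = 1 then 1 else 0)"
    by (simp add: sum.If_cases[of "{..<n}"] Int_def)
  also have "\<dots> = (\<Sum>i<n. x!i * y!i)"
    apply (rule sum.cong, simp)
    using binstr_nth[OF assms(1)] binstr_nth[OF assms(2)] by fastforce
  finally show ?thesis .
qed

lemma tosym_eq: "a \<in> {0,1} \<Longrightarrow> b \<in> {0,1} \<Longrightarrow> tosym a = tosym b \<longleftrightarrow> a = b"
  by (auto simp: tosym_def)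

lemma dist_le:
  assumes x: "x \<in> binstr m" and y: "y \<in> binstr m" and w: "w \<in> jok eps" and w': "w' \<in> jok del"
    and e: "eps \<in> binstr s" and dl: "del \<in> binstr s"
  shows "dist (map tosym x @ w) (map tosym y @ w') \<le>
     card {i. i < m \<and> x!i \<noteq> y!i} + card {i. i < s \<and> eps!i = 1 \<and> del!i = 1}"
proof -
  let ?u = "map tosym x @ w" and ?v = "map tosym y @ w'"
  define D where "D = {i. i < m \<and> x!i \<noteq> y!i}"
  define E where "E = {i. i < s \<and> eps!i = 1 \<and> del!i = 1}"
  have lx: "length x = m" and ly: "length y = m" using x y by (auto simp: binstr_def)
  have ls: "length eps = s" "length del = s" using e dl by (auto simp: binstr_def)
  have lw: "length w = s" "length w' = s" using jok_mem(1)[OF w] jok_mem(1)[OF w'] ls by auto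
  have sub: "{i. i < length ?u \<and> i < length ?v \<and> ?u!i \<noteq> ?v!i \<and> ?u!i \<noteq> Jk \<and> ?v!i \<noteq> Jk}
     \<subseteq> D \<union> (\<lambda>j. j + m) ` E"
  proof
    fix i assume i: "i \<in> {i. i < length ?u \<and> i < length ?v \<and> ?u!i \<noteq> ?v!i \<and> ?u!i \<noteq> Jk \<and> ?v!i \<noteq> Jk}"
    show "i \<in> D \<union> (\<lambda>j. j + m) ` E"
    proof (cases "i < m")
      case True
      with i lx ly have "tosym (x!i) \<noteq> tosym (y!i)" by (auto simp: nth_append)
      with True show ?thesis unfolding D_def by auto
    next
      case False
      define j where "j = i - m"
      have ij: "i = j + m" using False j_def by simp
      have jl: "j < s" using i lx lw ij by simp
      have "w!j \<noteq> Jk" "w'!j \<noteq> Jk" using i ij lx ly by (auto simp: nth_append)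
      then have "eps!j \<noteq> 0" "del!j \<noteq> 0" using jok_mem(2)[OF w] jok_mem(2)[OF w'] ls jl by auto
      then have "eps!j = 1" "del!j = 1" using binstr_nth[OF e jl] binstr_nth[OF dl jl] by auto
      with jl ij show ?thesis unfolding E_def by auto
    qed
  qed
  have fin: "finite D" "finite E" unfolding D_def E_def by auto
  have "dist ?u ?v \<le> card (D \<union> (\<lambda>j. j + m) ` E)"
    unfolding dist_def by (rule card_mono) (use fin sub in auto)
  also have "\<dots> \<le> card D + card ((\<lambda>j. j + m) ` E)" by (rule card_Un_le)
  also have "\<dots> \<le> card D + card E" using card_image_le[OF fin(2)] by simp
  finally show ?thesis unfolding D_def E_def .
qed

lemma D_P_le:
  assumes x: "x \<in> binstr m" and y: "y \<in> binstr m"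
  shows "card {i. i < m \<and> x!i \<noteq> y!i} + card {i. i < m \<and> x!i = 1 \<and> y!i = 1} \<le> m"
proof -
  have "card {i. i < m \<and> x!i \<noteq> y!i} + card {i. i < m \<and> x!i = 1 \<and> y!i = 1}
      = card ({i. i < m \<and> x!i \<noteq> y!i} \<union> {i. i < m \<and> x!i = 1 \<and> y!i = 1})"
    by (rule card_Un_disjoint[symmetric]) auto
  also have "\<dots> \<le> card {..<m}" by (rule card_mono) auto
  finally show ?thesis by simp
qed

lemma aux_last: "\<forall>j. (s::nat) - 1 \<le> j \<and> j < s \<longrightarrow> f j = f (s - 1)"
proof (intro allI impI)
  fix j assume "s - 1 \<le> j \<and> j < s"
  then have jj: "j = s - 1" by linarith
  show "f j = f (s - 1)" by (simp add: jj)
qed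

lemma tpos_props:
  assumes e: "eps \<in> binstr s" and n0: "eps \<noteq> replicate s 0" and n1: "eps \<noteq> replicate s 1"
  shows "1 \<le> tpos eps \<and> tpos eps < s \<and> (\<forall>j. tpos eps \<le> j \<and> j < s \<longrightarrow> eps!j = eps!(s-1))"
proof -
  have ls: "length eps = s" using e by (simp add: binstr_def)
  let ?Q = "\<lambda>i. \<forall>j. i \<le> j \<and> j < s \<longrightarrow> eps!j = eps!(s-1)"
  let ?P = "\<lambda>i. 1 \<le> i \<and> i < length eps \<and> eps!(i-1) \<noteq> eps!i \<and>
       (\<forall>j. i \<le> j \<and> j < length eps \<longrightarrow> eps!j = eps!(length eps - 1))"
  have spos: "s > 0" using n0 ls by (cases s) auto
  have qs: "?Q (s-1)" by (rule aux_last)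
  define i where "i = (LEAST i. ?Q i)"
  have qi: "?Q i" unfolding i_def by (rule LeastI[of ?Q, OF qs])
  have ile: "i \<le> s - 1" unfolding i_def by (rule Least_le[of ?Q, OF qs])
  have i1: "i \<ge> 1"
  proof (rule ccontr)
    assume "\<not> i \<ge> 1" then have "i = 0" by simp
    with qi have all: "\<forall>j<s. eps!j = eps!(s-1)" by blast
    have "eps!(s-1) = 0 \<or> eps!(s-1) = 1" using binstr_nth[OF e] spos by simp
    then show False
    proof
      assume "eps!(s-1) = 0"
      then have "\<forall>j<s. eps!j = 0" using all by metis
      then have "eps = replicate s 0" using ls by (intro nth_equalityI) auto
      with n0 show False by simp
    next
      assume "eps!(s-1) = 1"
      then have "\<forall>j<s. eps!j = 1" using all by metis
      then have "eps = replicate s 1" using ls by (intro nth_equalityI) auto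
      with n1 show False by simp
    qed
  qed
  have ne: "eps!(i-1) \<noteq> eps!i"
  proof
    assume eq: "eps!(i-1) = eps!i"
    have "?Q (i-1)"
    proof (intro allI impI)
      fix j assume j: "i - 1 \<le> j \<and> j < s"
      show "eps!j = eps!(s-1)"
      proof (cases "j = i - 1")
        case True
        have "eps!i = eps!(s-1)" using qi ile spos by (meson le_refl le_less_trans diff_less zero_less_one)
        then show ?thesis using eq True by simp
      next
        case False then have "i \<le> j" using j by linarith
        then show ?thesis using qi j by blast
      qed
    qed
    then have "i \<le> i - 1" unfolding i_def by (rule Least_le)
    with i1 show False by simp
  qed
  have Pi: "?P i"
  proof (intro conjI)
    show "1 \<le> i" by (rule i1)
    show "i < length eps" using ile spos ls by linarith
    show "eps!(i-1) \<noteq> eps!i" by (rule ne)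
    show "\<forall>j. i \<le> j \<and> j < length eps \<longrightarrow> eps!j = eps!(length eps - 1)" unfolding ls by (rule qi)
  qed
  have uniq: "\<And>k. ?P k \<Longrightarrow> k = i"
  proof -
    fix k assume Pk: "?P k"
    show "k = i"
    proof (rule ccontr)
      assume "k \<noteq> i"
      then have "k < i \<or> i < k" by auto
      then show False
      proof
        assume "k < i"
        then have h1: "k \<le> i - 1" "i - 1 < s" "k \<le> i" "i < s" using ile spos by linarith+
        have A: "\<forall>j. k \<le> j \<and> j < s \<longrightarrow> eps!j = eps!(s-1)"
          using Pk[THEN conjunct2, THEN conjunct2, THEN conjunct2] unfolding ls .
        have "eps!(i-1) = eps!(s-1)" "eps!i = eps!(s-1)"
          using A[rule_format, OF conjI[OF h1(1) h1(2)]] A[rule_format, OF conjI[OF h1(3) h1(4)]] .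
        with ne show False by simp
      next
        assume "i < k"
        then have h1: "i \<le> k - 1" "k - 1 < s" "i \<le> k" "k < s" using Pk ls by linarith+
        have "eps!(k-1) = eps!(s-1)" "eps!k = eps!(s-1)"
          using qi[rule_format, OF conjI[OF h1(1) h1(2)]] qi[rule_format, OF conjI[OF h1(3) h1(4)]] .
        moreover have "eps!(k-1) \<noteq> eps!k" using Pk[THEN conjunct2, THEN conjunct2, THEN conjunct1] .
        ultimately show False by simp
      qed
    qed
  qed
  have "tpos eps = i" unfolding tpos_def by (rule the_equality[of ?P, OF Pi uniq])
  moreover have "i < s" using ile spos by linarith
  ultimately show ?thesis using i1 qi by blast
qed

lemma wt_mid:
  assumes e: "eps \<in> binstr s" and n0: "eps \<noteq> replicate s 0" and n1: "eps \<noteq> replicate s 1"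
  shows "0 < wt eps \<and> wt eps < s"
proof -
  have ls: "length eps = s" using e by (simp add: binstr_def)
  have b: "\<And>i. i < s \<Longrightarrow> eps!i = 0 \<or> eps!i = 1" using binstr_nth[OF e] by blast
  have w: "wt eps = (\<Sum>i<s. eps!i)" using wt_sum ls by simp
  have "wt eps \<noteq> 0"
  proof
    assume "wt eps = 0"
    then have "\<forall>i<s. eps!i = 0" using w by simp
    then have "eps = replicate s 0" using ls by (intro nth_equalityI) auto
    with n0 show False by simp
  qed
  moreover have "wt eps < s"
  proof -
    have le: "\<And>i. i < s \<Longrightarrow> eps!i \<le> 1" using b by fastforce
    obtain k where k: "k < s" "eps!k \<noteq> 1"
    proof -
      have "\<not> (\<forall>i<s. eps!i = 1)"
      proof
        assume "\<forall>i<s. eps!i = 1"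
        then have "eps = replicate s 1" using ls by (intro nth_equalityI) auto
        with n1 show False by simp
      qed
      then show ?thesis using that by blast
    qed
    then have k0: "eps!k = 0" using b by blast
    have "(\<Sum>i<s. eps!i) < (\<Sum>i<s. (1::nat))"
      by (rule sum_strict_mono_ex1) (use le k k0 in auto)
    then show ?thesis using w by simp
  qed
  ultimately show ?thesis by simp
qed

lemma sum_pair_le:
  assumes "finite R" "\<And>i. i \<in> R \<Longrightarrow> (x i = 0 \<or> x i = 1) \<and> (y i = 0 \<or> y i = (1::nat))"
  shows "sum x R + sum y R \<le> (\<Sum>i\<in>R. x i * y i) + card R"
proof -
  have "sum x R + sum y R = (\<Sum>i\<in>R. x i + y i)" by (simp add: sum.distrib)
  also have "\<dots> \<le> (\<Sum>i\<in>R. x i * y i + 1)" by (rule sum_mono) (use assms(2) in fastforce)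
  also have "\<dots> = (\<Sum>i\<in>R. x i * y i) + card R" using sum.distrib[of "\<lambda>i. x i * y i" "\<lambda>_. 1" R] by simp
  finally show ?thesis .
qed

lemma Bset_mid:
  assumes e: "eps \<in> binstr s" and n0: "eps \<noteq> replicate s 0" and n1: "eps \<noteq> replicate s 1"
    and x: "x \<in> Bset d s eps" and sd: "2 * s \<le> d"
  shows "x \<in> binstr (d - s)" "wt x = d div 2 - s + wt eps"
    "\<And>j. j < tpos eps \<Longrightarrow> x!(d - 2*s + 1 + j) = eps!j"
proof -
  have w: "0 < wt eps \<and> wt eps < s" using wt_mid[OF e n0 n1] .
  have ls: "length eps = s" using e by (simp add: binstr_def)
  have xb: "x \<in> Xset d s (wt eps)" and xa: "drop (d - 2*s + 1) x \<in> Aset eps"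
    using x n0 n1 unfolding Bset_def by auto
  have xx: "x \<in> binstr (d - s) \<and> wt x = d div 2 - s + wt eps"
    using xb w unfolding Xset_def by (auto split: if_splits)
  then show "x \<in> binstr (d - s)" "wt x = d div 2 - s + wt eps" by auto
  have lx: "length x = d - s" using xx by (simp add: binstr_def)
  fix j assume j: "j < tpos eps"
  have "(drop (d - 2*s + 1) x)!j = eps!j" using xa j unfolding Aset_def by blast
  moreover have "d - 2*s + 1 \<le> length x" using lx sd tpos_props[OF e n0 n1] by linarith
  ultimately show "x!(d - 2*s + 1 + j) = eps!j" by simp
qed

lemma sum_reidx: "(\<Sum>i\<in>(\<lambda>j. (n0::nat) + j) ` {..<t}. f i) = (\<Sum>j<t. f (n0 + j))"
  by (subst sum.reindex) (auto simp: inj_on_def)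

lemma key_mid:
  assumes de: "even d" and sd: "2 * s \<le> d"
    and e: "eps \<in> binstr s" and en0: "eps \<noteq> replicate s 0" and en1: "eps \<noteq> replicate s 1"
    and dl: "del \<in> binstr s" and dn0: "del \<noteq> replicate s 0" and dn1: "del \<noteq> replicate s 1"
    and x: "x \<in> Bset d s eps" and y: "y \<in> Bset d s del" and tt: "tpos eps \<le> tpos del"
  shows "(\<Sum>j<s. eps!j * del!j) \<le> (\<Sum>i<d-s. x!i * y!i)"
proof -
  define h where "h = d div 2"
  have dh: "d = 2 * h" using de h_def by auto
  define m where "m = d - s"
  define n0 where "n0 = d - 2*s + 1"
  define t where "t = tpos eps"
  have tp: "1 \<le> t \<and> t < s \<and> (\<forall>j. t \<le> j \<and> j < s \<longrightarrow> eps!j = eps!(s-1))"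
    using tpos_props[OF e en0 en1] unfolding t_def .
  have tq: "\<forall>j. t \<le> j \<and> j < s \<longrightarrow> eps!j = eps!(s-1)" using tp by blast
  have xb: "x \<in> binstr m" and wx: "wt x = h - s + wt eps" and xf: "\<And>j. j < t \<Longrightarrow> x!(n0 + j) = eps!j"
    using Bset_mid[OF e en0 en1 x sd] unfolding m_def h_def n0_def t_def by auto
  have yb: "y \<in> binstr m" and wy: "wt y = h - s + wt del" and yf: "\<And>j. j < t \<Longrightarrow> y!(n0 + j) = del!j"
    using Bset_mid[OF dl dn0 dn1 y sd] tt unfolding m_def h_def n0_def t_def by auto
  have lx: "length x = m" "length y = m" using xb yb by (auto simp: binstr_def)
  have le: "length eps = s" "length del = s" using e dl by (auto simp: binstr_def)
  have bx: "\<And>i. i < m \<Longrightarrow> x!i = 0 \<or> x!i = 1" using binstr_nth[OF xb] by blast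
  have by': "\<And>i. i < m \<Longrightarrow> y!i = 0 \<or> y!i = 1" using binstr_nth[OF yb] by blast
  have be: "\<And>i. i < s \<Longrightarrow> eps!i = 0 \<or> eps!i = 1" using binstr_nth[OF e] by blast
  have bd: "\<And>i. i < s \<Longrightarrow> del!i = 0 \<or> del!i = 1" using binstr_nth[OF dl] by blast
  define F where "F = (\<lambda>j. n0 + j) ` {..<t}"
  define R where "R = {..<m} - F"
  define Q where "Q = {..<s} - {..<t}"
  have mn: "m = n0 + (s - 1)" unfolding m_def n0_def using sd tp by linarith
  have FR: "F \<subseteq> {..<m}" unfolding F_def using mn tp by auto
  have injn: "inj_on (\<lambda>j. n0 + j) {..<t}" by (rule inj_onI) (metis add_left_cancel)
  have cF: "card F = t" unfolding F_def by (subst card_image[OF injn]) simp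
  have cR: "card R = m - t" unfolding R_def using FR cF by (simp add: card_Diff_subset finite_subset)
  have cQ: "card Q = s - t" unfolding Q_def using tp by (simp add: card_Diff_subset)
  have tQ: "{..<t} \<subseteq> {..<s}" using tp by auto
  have split_m: "\<And>f. (\<Sum>i<m. f i) = (\<Sum>i\<in>R. f i) + (\<Sum>i\<in>F. f i)"
    unfolding R_def using sum.subset_diff[OF FR] by simp
  have split_s: "\<And>f. (\<Sum>i<s. f i) = (\<Sum>i\<in>Q. f i) + (\<Sum>i<t. f i)"
    unfolding Q_def using sum.subset_diff[OF tQ] by simp
  have SFxy: "(\<Sum>i\<in>F. x!i * y!i) = (\<Sum>j<t. eps!j * del!j)"
    unfolding F_def sum_reidx by (rule sum.cong) (auto simp: xf yf)
  have SFx: "(\<Sum>i\<in>F. x!i) = (\<Sum>j<t. eps!j)"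
    unfolding F_def sum_reidx by (rule sum.cong) (auto simp: xf)
  have SFy: "(\<Sum>i\<in>F. y!i) = (\<Sum>j<t. del!j)"
    unfolding F_def sum_reidx by (rule sum.cong) (auto simp: yf)
  have Qe: "\<And>j. j \<in> Q \<Longrightarrow> eps!j = eps!(s-1)" using tq unfolding Q_def by auto
  have c01: "eps!(s-1) = 0 \<or> eps!(s-1) = 1" using be tp by simp
  then show ?thesis
  proof
    assume c0: "eps!(s-1) = 0"
    have "(\<Sum>i\<in>Q. eps!i * del!i) = 0" using Qe c0 by simp
    then have "(\<Sum>j<s. eps!j * del!j) = (\<Sum>i\<in>F. x!i * y!i)" using split_s[of "\<lambda>i. eps!i * del!i"] SFxy by simp
    also have "\<dots> \<le> (\<Sum>i<m. x!i * y!i)" using split_m[of "\<lambda>i. x!i * y!i"] by simp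
    finally show ?thesis unfolding m_def .
  next
    assume c1: "eps!(s-1) = 1"
    have Q1: "(\<Sum>i\<in>Q. eps!i * del!i) = (\<Sum>i\<in>Q. del!i)" using Qe c1 by simp
    have Q2: "(\<Sum>i\<in>Q. eps!i) = s - t" using Qe c1 cQ by simp
    have pair: "(\<Sum>i\<in>R. x!i) + (\<Sum>i\<in>R. y!i) \<le> (\<Sum>i\<in>R. x!i * y!i) + card R"
    proof (rule sum_pair_le)
      show "finite R" unfolding R_def by simp
      fix i assume "i \<in> R"
      then have "i < m" unfolding R_def by simp
      then show "(x!i = 0 \<or> x!i = 1) \<and> (y!i = 0 \<or> y!i = 1)" using bx by' by blast
    qed
    have wx': "(\<Sum>i\<in>R. x!i) + (\<Sum>j<t. eps!j) = h - s + ((s - t) + (\<Sum>j<t. eps!j))"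
      using wx split_m[of "\<lambda>i. x!i"] split_s[of "\<lambda>i. eps!i"] SFx Q2 wt_sum[of x] wt_sum[of eps] lx le
      by simp
    have wy': "(\<Sum>i\<in>R. y!i) + (\<Sum>j<t. del!j) = h - s + ((\<Sum>i\<in>Q. del!i) + (\<Sum>j<t. del!j))"
      using wy split_m[of "\<lambda>i. y!i"] split_s[of "\<lambda>i. del!i"] SFy wt_sum[of y] wt_sum[of del] lx le
      by simp
    have hs: "s \<le> h" "m = 2*h - s" using sd dh m_def by auto
    have core: "(\<Sum>i\<in>Q. del!i) \<le> (\<Sum>i\<in>R. x!i * y!i)"
      using pair wx' wy' cR hs tp by linarith
    have "(\<Sum>j<s. eps!j * del!j) = (\<Sum>i\<in>Q. del!i) + (\<Sum>i\<in>F. x!i * y!i)"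
      using split_s[of "\<lambda>i. eps!i * del!i"] Q1 SFxy by simp
    also have "\<dots> \<le> (\<Sum>i\<in>R. x!i * y!i) + (\<Sum>i\<in>F. x!i * y!i)" using core by simp
    also have "\<dots> = (\<Sum>i<m. x!i * y!i)" using split_m[of "\<lambda>i. x!i * y!i"] by simp
    finally show ?thesis unfolding m_def .
  qed
qed

lemma Bset_bin: "x \<in> Bset d s eps \<Longrightarrow> x \<in> binstr (d - s)"
  unfolding Bset_def Xset_def by (auto split: if_splits)

lemma rep_ne: "s > 0 \<Longrightarrow> replicate s (1::nat) \<noteq> replicate s 0"
  by (cases s) auto

lemma sum_rep0: "eps = replicate s (0::nat) \<Longrightarrow> (\<Sum>j<s. eps!j * f j) = 0"
  by simp

lemma key_omega:
  assumes de: "even d" and sd: "2 * s \<le> d" and sp: "s > 0"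
    and dl: "del \<in> binstr s" and dn0: "del \<noteq> replicate s 0"
    and x: "x \<in> Bset d s (replicate s 1)" and y: "y \<in> Bset d s del"
  shows "(\<Sum>j<s. replicate s 1 ! j * del!j) \<le> (\<Sum>i<d-s. x!i * y!i)"
proof -
  define h where "h = d div 2"
  have dh: "d = 2 * h" using de h_def by auto
  define m where "m = d - s"
  have xb: "x \<in> binstr m" and yb: "y \<in> binstr m" using Bset_bin x y unfolding m_def by auto
  have wx: "wt x \<ge> h" using x rep_ne[OF sp] sp unfolding Bset_def Xset_def h_def by auto
  have lx: "length x = m" "length y = m" using xb yb by (auto simp: binstr_def)
  have ld: "length del = s" using dl by (simp add: binstr_def)
  have pair: "(\<Sum>i<m. x!i) + (\<Sum>i<m. y!i) \<le> (\<Sum>i<m. x!i * y!i) + card {..<m}"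
    by (rule sum_pair_le) (use binstr_nth[OF xb] binstr_nth[OF yb] in auto)
  have L: "(\<Sum>j<s. replicate s 1 ! j * del!j) = wt del"
    using wt_sum[of del] ld by simp
  have hs: "s \<le> h" "m = 2*h - s" using sd dh m_def by auto
  show ?thesis
  proof (cases "del = replicate s 1")
    case True
    then have wy: "wt y \<ge> h" using y rep_ne[OF sp] sp unfolding Bset_def Xset_def h_def by auto
    have "wt del = s" using True unfolding wt_def by (simp add: sum_list_replicate)
    then show ?thesis using L pair wx wy wt_sum[of x] wt_sum[of y] lx hs unfolding m_def[symmetric] by (simp; arith)
  next
    case False
    have wy: "wt y = h - s + wt del" using Bset_mid(2)[OF dl dn0 False y sd] unfolding h_def .
    show ?thesis using L pair wx wy wt_sum[of x] wt_sum[of y] lx hs unfolding m_def[symmetric] by (simp; arith)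
  qed
qed

lemma key_all:
  assumes de: "even d" and sd: "2 * s \<le> d" and sp: "s > 0"
    and e: "eps \<in> binstr s" and dl: "del \<in> binstr s"
    and x: "x \<in> Bset d s eps" and y: "y \<in> Bset d s del"
  shows "(\<Sum>j<s. eps!j * del!j) \<le> (\<Sum>i<d-s. x!i * y!i)"
proof -
  have sym: "(\<Sum>j<s. eps!j * del!j) = (\<Sum>j<s. del!j * eps!j)" "(\<Sum>i<d-s. x!i * y!i) = (\<Sum>i<d-s. y!i * x!i)"
    by (simp_all add: mult.commute)
  show ?thesis
  proof (cases "eps = replicate s 0 \<or> del = replicate s 0")
    case True then show ?thesis by auto
  next
    case False
    then have en0: "eps \<noteq> replicate s 0" and dn0: "del \<noteq> replicate s 0" by auto
    show ?thesis
    proof (cases "eps = replicate s 1")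
      case True then show ?thesis using key_omega[OF de sd sp dl dn0 _ y] x by simp
    next
      case en1: False
      show ?thesis
      proof (cases "del = replicate s 1")
        case True then show ?thesis using key_omega[OF de sd sp e en0 _ x] y sym by simp
      next
        case dn1: False
        show ?thesis
        proof (cases "tpos eps \<le> tpos del")
          case True then show ?thesis using key_mid[OF de sd e en0 en1 dl dn0 dn1 x y] by simp
        next
          case False then show ?thesis using key_mid[OF de sd dl dn0 dn1 e en0 en1 y x] sym by simp
        qed
      qed
    qed
  qed
qed

theorem lemma5:
  fixes d s :: nat
  assumes "d > 0" and "even d" and "s > 0" and "2 * s \<le> d"
  shows "neighborly (d - s) (\<Union>eps \<in> binstr s. Cset d s eps)"
  unfolding neighborly_def
proof (intro ballI)
  fix u v assume u: "u \<in> (\<Union>eps \<in> binstr s. Cset d s eps)" and v: "v \<in> (\<Union>eps \<in> binstr s. Cset d s eps)"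
  obtain eps x w where e: "eps \<in> binstr s" and x: "x \<in> Bset d s eps" and w: "w \<in> jok eps"
    and uu: "u = map tosym x @ w" using u unfolding Cset_def by blast
  obtain del y w' where dl: "del \<in> binstr s" and y: "y \<in> Bset d s del" and w': "w' \<in> jok del"
    and vv: "v = map tosym y @ w'" using v unfolding Cset_def by blast
  have xb: "x \<in> binstr (d - s)" and yb: "y \<in> binstr (d - s)" using Bset_bin x y by auto
  have "dist u v \<le> card {i. i < d - s \<and> x!i \<noteq> y!i} + card {i. i < s \<and> eps!i = 1 \<and> del!i = 1}"
    unfolding uu vv by (rule dist_le[OF xb yb w w' e dl])
  also have "card {i. i < s \<and> eps!i = 1 \<and> del!i = 1} = (\<Sum>j<s. eps!j * del!j)"
    by (rule card_both1[OF e dl])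
  also have "\<dots> \<le> (\<Sum>i<d-s. x!i * y!i)" by (rule key_all[OF assms(2) assms(4) assms(3) e dl x y])
  also have "\<dots> = card {i. i < d - s \<and> x!i = 1 \<and> y!i = 1}" by (rule card_both1[OF xb yb, symmetric])
  finally show "dist u v \<le> d - s" using D_P_le[OF xb yb] by linarith
qed

end
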